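(* Let $n\in\mathbb{N}$ and let $M_n(x):=\frac{1}{(n-1)!}\sum_{j=0}^{n}(-1)^j\binom{n}{j}\left(\frac n2+x-j\right)_+^{n-1}$ be the B-spline of order $n$, where $(x)_+=\max\{x,0\}$. Let $(g_w)_{w>0}$ be functions $g_w:\mathbb{R}\to\mathbb{R}$ with $g_w(u)\to u$ uniformly on $\mathbb{R}$ as $w\to\infty$, $g_w(0)=0$ for all $w$, $|g_w(u)-g_w(v)|\le\psi(|u-v|)$ for all $u,v$, $w>0$ and some $\varphi$-function $\psi$, and $\sup_{u\ne0}|g_w(u)/u-1|=\mathcal{O}(w^{-\theta_0})$ as $w\to\infty$ for some $\theta_0>0$. Define $$(S_w^{M_n}f)(x):=\sum_{k\in\mathbb{Z}}M_n(wx-k)\,g_w\!\left(w\int_{k/w}^{(k+1)/w}f(u)\,du\right).$$ Let $\varphi$ be a convex $\varphi$-function satisfying condition (H) (relative to $\psi$) with a convex $\varphi$-function $\eta$, and let $f\in L^{\varphi+\eta}(\mathbb{R})$. Then for every $0<\alpha<1$ there exist constants $\mu>0$, $\lambda_0>0$ and $\lambda>0$ such that, with $\omega(f,\delta')_\eta:=\sup_{|t|\le\delta'}I^{\eta}[\lambda(f(\cdot+t)-f(\cdot))]$, for sufficiently large $w>0$, $$I^{\varphi}[\mu(S_w^{M_n}f-f)]\le\frac13\,\omega(f,1/w^{\alpha})_\eta+\frac13\,\omega(f,1/w)_\eta+\frac{I^{\varphi}[\lambda_0f]}{3}\,w^{-\theta_0}.$$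
   Context: A $\varphi$-function is a continuous non-decreasing $\varphi:[0,\infty)\to[0,\infty)$ with $\varphi(0)=0$, $\varphi(u)>0$ for $u>0$, $\varphi(u)\to+\infty$ as $u\to\infty$. $I^{\varphi}[f]:=\int_{\mathbb{R}}\varphi(|f(x)|)\,dx$; $L^{\varphi}(\mathbb{R})=\{f\text{ measurable}: I^{\varphi}[\lambda f]<\infty\text{ for some }\lambda>0\}$; $L^{\varphi+\eta}(\mathbb{R})$ is the Orlicz space generated by $\varphi+\eta$. Condition (H): there is a $\varphi$-function $\eta$ such that for every $\lambda\in(0,1)$ there exists $C_\lambda\in(0,1)$ with $\varphi(C_\lambda\psi(u))\le\eta(\lambda u)$ for all $u\ge0$. The operator $S_w^{M_n}f$ is considered for locally integrable $f$ for which the series converges at every $x$. *)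

theory Defs
  imports "HOL-Analysis.Analysis"
begin

definition phi_function :: "(real \<Rightarrow> real) \<Rightarrow> bool" where
  "phi_function \<phi> \<longleftrightarrow>
     continuous_on {0..} \<phi> \<and> mono_on {0..} \<phi> \<and> \<phi> 0 = 0 \<and>
     (\<forall>u>0. \<phi> u > 0) \<and> filterlim \<phi> at_top at_top"

definition modular :: "(real \<Rightarrow> real) \<Rightarrow> (real \<Rightarrow> real) \<Rightarrow> ennreal" where
  "modular \<phi> f = (\<integral>\<^sup>+ x. ennreal (\<phi> \<bar>f x\<bar>) \<partial>lebesgue)"

definition orlicz :: "(real \<Rightarrow> real) \<Rightarrow> (real \<Rightarrow> real) set" where
  "orlicz \<phi> = {f. f \<in> borel_measurable lebesgue \<and>
                  (\<exists>c>0. modular \<phi> (\<lambda>x. c * f x) < \<infinity>)}"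

definition condH :: "(real \<Rightarrow> real) \<Rightarrow> (real \<Rightarrow> real) \<Rightarrow> (real \<Rightarrow> real) \<Rightarrow> bool" where
  "condH \<phi> \<psi> \<eta> \<longleftrightarrow> phi_function \<eta> \<and>
     (\<forall>l. 0 < l \<and> l < 1 \<longrightarrow>
        (\<exists>C. 0 < C \<and> C < 1 \<and> (\<forall>u\<ge>0. \<phi> (C * \<psi> u) \<le> \<eta> (l * u))))"

text \<open>Truncated power (x)_+^k, with the convention (x)_+^0 = 1 if x > 0 and 0 otherwise.\<close>
definition plus_pow :: "real \<Rightarrow> nat \<Rightarrow> real" where
  "plus_pow x k = (if x > 0 then x ^ k else 0)"

definition bspline :: "nat \<Rightarrow> real \<Rightarrow> real" where
  "bspline n x = (1 / fact (n - 1)) *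
     (\<Sum>j = 0..n. (-1) ^ j * real (n choose j) * plus_pow (real n / 2 + x - real j) (n - 1))"

definition S_op :: "nat \<Rightarrow> (real \<Rightarrow> real \<Rightarrow> real) \<Rightarrow> real \<Rightarrow> (real \<Rightarrow> real) \<Rightarrow> real \<Rightarrow> real" where
  "S_op n g w f x = (\<Sum>\<^sub>\<infinity>k::int. bspline n (w * x - real_of_int k) *
       g w (w * (LINT u:{real_of_int k / w .. (real_of_int k + 1) / w}|lebesgue. f u)))"

definition modulus :: "(real \<Rightarrow> real) \<Rightarrow> real \<Rightarrow> (real \<Rightarrow> real) \<Rightarrow> real \<Rightarrow> ennreal" where
  "modulus \<eta> l f \<delta> = (SUP t\<in>{t. \<bar>t\<bar> \<le> \<delta>}. modular \<eta> (\<lambda>x. l * (f (x + t) - f x)))"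

end

theory Submission
  imports Defs "HOL-Probability.Probability_Measure"
begin


lemma pascal_alt:
  fixes p :: "nat \<Rightarrow> real"
  shows "(\<Sum>j\<le>Suc N. (-1)^j * real (Suc N choose j) * p j)
       = (\<Sum>j\<le>N. (-1)^j * real (N choose j) * (p j - p (Suc j)))"
proof -
  have A: "(\<Sum>j\<le>Suc N. (-1)^j * real (Suc N choose j) * p j)
     = p 0 + (\<Sum>j\<le>N. (-1)^(Suc j) * real (Suc N choose Suc j) * p (Suc j))"
    by (subst sum.atMost_Suc_shift) simp
  have B: "(\<Sum>j\<le>N. (-1)^(Suc j) * real (Suc N choose Suc j) * p (Suc j))
     = - (\<Sum>j\<le>N. (-1)^j * real (N choose j) * p (Suc j))
       - (\<Sum>j\<le>N. (-1)^j * real (N choose Suc j) * p (Suc j))"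
    by (simp add: sum_negf[symmetric] sum_subtractf[symmetric] algebra_simps)
  have C: "(\<Sum>j\<le>Suc N. (-1)^j * real (N choose j) * p j)
     = p 0 + (\<Sum>j\<le>N. (-1)^(Suc j) * real (N choose Suc j) * p (Suc j))"
    by (subst sum.atMost_Suc_shift) simp
  have D: "(\<Sum>j\<le>Suc N. (-1)^j * real (N choose j) * p j) = (\<Sum>j\<le>N. (-1)^j * real (N choose j) * p j)"
    by simp
  have E: "(\<Sum>j\<le>N. (-1)^(Suc j) * real (N choose Suc j) * p (Suc j))
      = - (\<Sum>j\<le>N. (-1)^j * real (N choose Suc j) * p (Suc j))"
    by (simp add: sum_negf[symmetric])
  show ?thesis using A B C D E
    by (simp add: sum_subtractf right_diff_distrib)
qed

lemma alt_power_sum: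
  fixes c :: real
  shows "m \<le> N \<Longrightarrow> (\<Sum>i\<le>N. (-1)^i * real (N choose i) * (c - real i)^m) = (if m = N then fact N else 0)"
proof (induction N arbitrary: c m)
  case 0
  then show ?case by simp
next
  case (Suc N)
  have "(\<Sum>i\<le>Suc N. (-1)^i * real (Suc N choose i) * (c - real i)^m)
      = (\<Sum>i\<le>N. (-1)^i * real (N choose i) * ((c - real i)^m - (c - real (Suc i))^m))"
    by (rule pascal_alt)
  also have "\<dots> = (\<Sum>i\<le>N. (-1)^i * real (N choose i) *
        (- (\<Sum>r<m. real (m choose r) * (-1)^(m-r) * (c - real i)^r)))"
  proof (rule sum.cong[OF refl])
    fix i
    have "(c - real (Suc i))^m = ((c - real i) + (-1))^m" by (simp add: algebra_simps)
    also have "\<dots> = (\<Sum>r\<le>m. real (m choose r) * (c - real i)^r * (-1)^(m-r))"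
      by (rule binomial_ring)
    also have "\<dots> = (\<Sum>r<m. real (m choose r) * (c - real i)^r * (-1)^(m-r)) + (c - real i)^m"
      by (simp add: lessThan_Suc_atMost[symmetric])
    finally show "(-1)^i * real (N choose i) * ((c - real i)^m - (c - real (Suc i))^m)
       = (-1)^i * real (N choose i) * (- (\<Sum>r<m. real (m choose r) * (-1)^(m-r) * (c - real i)^r))"
      by (simp add: algebra_simps)
  qed
  also have "\<dots> = - (\<Sum>r<m. real (m choose r) * (-1)^(m-r) *
          (\<Sum>i\<le>N. (-1)^i * real (N choose i) * (c - real i)^r))"
    by (simp add: sum_distrib_left sum_negf[symmetric] sum.swap[of _ "{..<m}"] algebra_simps)
  also have "\<dots> = - (\<Sum>r<m. real (m choose r) * (-1)^(m-r) * (if r = N then fact N else 0))"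
    using Suc.prems by (intro arg_cong[where f=uminus] sum.cong refl) (simp add: Suc.IH)
  also have "\<dots> = (if m = Suc N then fact (Suc N) else 0)"
  proof (cases "m = Suc N")
    case True
    have "(\<Sum>r<m. real (m choose r) * (-1)^(m-r) * (if r = N then fact N else 0))
        = real (m choose N) * (-1)^(m-N) * fact N"
      using True by (subst sum.remove[of _ N]) auto
    then show ?thesis using True by (simp add: algebra_simps)
  next
    case False
    then have "m \<le> N" using Suc.prems by simp
    then show ?thesis using False by (auto intro!: sum.neutral)
  qed
  finally show ?case .
qed



lemma bspline_alt: "bspline n x = (1 / fact (n - 1)) *
     (\<Sum>j\<le>n. (-1) ^ j * real (n choose j) * plus_pow (real n / 2 + x - real j) (n - 1))"
  unfolding bspline_def by (simp add: atLeast0AtMost)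

lemma bspline_zero_left:
  assumes "x < - real n / 2"
  shows "bspline n x = 0"
  unfolding bspline_alt plus_pow_def using assms by (auto intro!: sum.neutral)

lemma bspline_zero_right:
  assumes n: "n \<ge> 1" and x: "x > real n / 2"
  shows "bspline n x = 0"
proof -
  have "(\<Sum>j\<le>n. (-1) ^ j * real (n choose j) * plus_pow (real n / 2 + x - real j) (n - 1))
      = (\<Sum>j\<le>n. (-1) ^ j * real (n choose j) * ((real n / 2 + x) - real j) ^ (n - 1))"
  proof (rule sum.cong[OF refl])
    fix j assume "j \<in> {..n}"
    then have "real n / 2 + x - real j > 0" using x by auto
    then show "(-1) ^ j * real (n choose j) * plus_pow (real n / 2 + x - real j) (n - 1)
      = (-1) ^ j * real (n choose j) * ((real n / 2 + x) - real j) ^ (n - 1)"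
      by (simp add: plus_pow_def)
  qed
  also have "\<dots> = 0" using n by (subst alt_power_sum) auto
  finally show ?thesis unfolding bspline_alt by simp
qed

lemma bspline_bound:
  assumes x: "x \<le> real n / 2"
  shows "\<bar>bspline n x\<bar> \<le> 2 ^ n * real n ^ (n - 1)"
proof -
  have f1: "1 / fact (n - 1) \<le> (1::real)" by (simp add: divide_le_eq_1)
  have "\<bar>\<Sum>j\<le>n. (-1) ^ j * real (n choose j) * plus_pow (real n / 2 + x - real j) (n - 1)\<bar>
      \<le> (\<Sum>j\<le>n. real (n choose j) * real n ^ (n - 1))"
  proof (rule order_trans[OF sum_abs], rule sum_mono)
    fix j assume "j \<in> {..n}"
    have "\<bar>plus_pow (real n / 2 + x - real j) (n - 1)\<bar> \<le> real n ^ (n - 1)"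
      unfolding plus_pow_def using x
      by (auto intro!: power_mono)
    then show "\<bar>(-1) ^ j * real (n choose j) * plus_pow (real n / 2 + x - real j) (n - 1)\<bar>
        \<le> real (n choose j) * real n ^ (n - 1)"
      by (simp add: abs_mult mult_left_mono)
  qed
  also have "\<dots> = 2 ^ n * real n ^ (n - 1)"
    by (simp add: sum_distrib_right[symmetric] choose_row_sum[symmetric] of_nat_sum[symmetric] del: of_nat_sum)
  finally have A: "\<bar>\<Sum>j\<le>n. (-1) ^ j * real (n choose j) * plus_pow (real n / 2 + x - real j) (n - 1)\<bar>
      \<le> 2 ^ n * real n ^ (n - 1)" .
  have B: "2 ^ n * real n ^ (n - 1) \<le> 2 ^ n * real n ^ (n - 1) * (fact (n - 1)::real)"
    using mult_left_mono[OF fact_ge_1[of "n - 1", where 'a=real], of "2 ^ n * real n ^ (n - 1)"] by simp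
  have C: "\<bar>\<Sum>j\<le>n. (-1) ^ j * real (n choose j) * plus_pow (real n / 2 + x - real j) (n - 1)\<bar>
      \<le> 2 ^ n * real n ^ (n - 1) * (fact (n - 1)::real)"
    by (rule order_trans[OF A B])
  have D: "0 < (fact (n - 1)::real)" by simp
  show ?thesis unfolding bspline_alt abs_mult
    using C D by (simp add: divide_le_eq mult.commute)
qed

lemma bspline_partition:
  assumes n: "n \<ge> 1"
  shows "(\<Sum>i\<le>n. bspline n (y - real_of_int (\<lceil>y - real n / 2\<rceil> + int i))) = 1"
proof -
  obtain N where nN: "n = Suc N" using n by (cases n) auto
  have nN1: "n - 1 = N" using nN by simp
  define z where "z = y + real n / 2"
  define k0 where "k0 = real_of_int \<lceil>y - real n / 2\<rceil>"
  have k0a: "k0 \<ge> z - real n" unfolding k0_def z_def by linarith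
  have k0b: "k0 < z - real n + 1" unfolding k0_def z_def by linarith
  define Q where "Q r k = (\<Sum>j\<le>r. (-1)^j * real (r choose j) * plus_pow (z - k - real j) N)" for r k
  have bs: "bspline n (y - real_of_int (\<lceil>y - real n / 2\<rceil> + int i)) = Q n (k0 + real i) / fact N" for i
    unfolding bspline_alt Q_def k0_def z_def nN1 by (simp add: algebra_simps)
  have rec: "Q n k = Q N k - Q N (k + 1)" for k
    unfolding Q_def nN
    by (subst pascal_alt) (simp add: sum_subtractf right_diff_distrib diff_diff_eq add_ac del: sum.atMost_Suc)
  have "(\<Sum>i\<le>n. Q n (k0 + real i)) = (\<Sum>i\<le>n. Q N (k0 + real i) - Q N (k0 + real (Suc i)))"
    by (intro sum.cong refl) (simp add: rec add_ac)
  also have "\<dots> = Q N k0 - Q N (k0 + real (Suc n))"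
    by (subst sum_telescope[where f="\<lambda>i. Q N (k0 + real i)"]) simp
  also have "Q N (k0 + real (Suc n)) = 0"
    unfolding Q_def plus_pow_def using k0a by (auto intro!: sum.neutral)
  also have "Q N k0 = (\<Sum>j\<le>N. (-1)^j * real (N choose j) * ((z - k0) - real j) ^ N)"
    unfolding Q_def plus_pow_def using k0b nN by (intro sum.cong refl) auto
  also have "\<dots> = fact N" by (subst alt_power_sum) auto
  finally have "(\<Sum>i\<le>n. Q n (k0 + real i)) = fact N" by simp
  then show ?thesis unfolding bs sum_divide_distrib[symmetric] by simp
qed



lemma convex_scale:
  fixes \<phi> :: "real \<Rightarrow> real"
  assumes "convex_on {0..} \<phi>" "\<phi> 0 = 0" "0 \<le> s" "s \<le> 1" "0 \<le> v"
  shows "\<phi> (s * v) \<le> s * \<phi> v"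
  using convex_onD[OF assms(1), of s 0 v] assms by simp

lemma convex_lin_lower:
  fixes \<phi> :: "real \<Rightarrow> real"
  assumes "convex_on {0..} \<phi>" "\<phi> 0 = 0" "1 \<le> v"
  shows "v * \<phi> 1 \<le> \<phi> v"
proof -
  have "\<phi> ((1 / v) * v) \<le> (1 / v) * \<phi> v"
    using assms by (intro convex_scale) auto
  then show ?thesis using assms(3) by (simp add: field_simps)
qed

lemma convex_abs_comp:
  fixes \<eta> :: "real \<Rightarrow> real"
  assumes "convex_on {0..} \<eta>" "mono_on {0..} \<eta>"
  shows "convex_on UNIV (\<lambda>v. \<eta> \<bar>v\<bar>)"
proof (rule convex_onI)
  show "convex (UNIV::real set)" by simp
next
  fix t x y :: real assume t: "0 < t" "t < 1"
  have "\<bar>(1 - t) * x + t * y\<bar> \<le> (1 - t) * \<bar>x\<bar> + t * \<bar>y\<bar>"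
    using t by (intro order_trans[OF abs_triangle_ineq]) (simp add: abs_mult)
  then have "\<eta> \<bar>(1 - t) * x + t * y\<bar> \<le> \<eta> ((1 - t) * \<bar>x\<bar> + t * \<bar>y\<bar>)"
    using t by (intro mono_onD[OF assms(2)]) auto
  also have "\<dots> \<le> (1 - t) * \<eta> \<bar>x\<bar> + t * \<eta> \<bar>y\<bar>"
    using convex_onD[OF assms(1), of t "\<bar>x\<bar>" "\<bar>y\<bar>"] t by simp
  finally show "\<eta> \<bar>(1 - t) *\<^sub>R x + t *\<^sub>R y\<bar> \<le> (1 - t) * \<eta> \<bar>x\<bar> + t * \<eta> \<bar>y\<bar>" by simp
qed

lemma phi_nonneg:
  assumes "phi_function \<phi>" "0 \<le> v"
  shows "0 \<le> \<phi> v"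
proof -
  have "mono_on {0..} \<phi>" "\<phi> 0 = 0" using assms(1) unfolding phi_function_def by auto
  then show ?thesis using assms(2) mono_onD[of "{0..}" \<phi> 0 v] by simp
qed

lemma phi_mono:
  assumes "phi_function \<phi>" "0 \<le> u" "u \<le> v"
  shows "\<phi> u \<le> \<phi> v"
proof -
  have "mono_on {0..} \<phi>" using assms(1) unfolding phi_function_def by auto
  then show ?thesis using assms mono_onD[of "{0..}" \<phi> u v] by simp
qed

lemma phi_abs_cont:
  assumes "phi_function \<phi>"
  shows "continuous_on UNIV (\<lambda>v. \<phi> \<bar>v\<bar>)"
proof -
  have "continuous_on {0..} \<phi>" using assms unfolding phi_function_def by simp
  then show ?thesis
    by (rule continuous_on_compose2[OF _ continuous_on_rabs[OF continuous_on_id]]) auto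
qed

lemma phi_abs_meas[measurable]:
  assumes "phi_function \<phi>"
  shows "(\<lambda>v. \<phi> \<bar>v\<bar>) \<in> borel_measurable borel"
  by (rule borel_measurable_continuous_onI[OF phi_abs_cont[OF assms]])



lemma local_int:
  fixes \<phi> f :: "real \<Rightarrow> real"
  assumes phi: "phi_function \<phi>" "convex_on {0..} \<phi>" and c: "c > 0" and ab: "a \<le> b"
    and f[measurable]: "f \<in> borel_measurable borel"
    and fin: "(\<integral>\<^sup>+x. ennreal (\<phi> \<bar>c * f x\<bar>) \<partial>lborel) < \<infinity>"
  shows "set_integrable lborel {a..b} f"
  unfolding set_integrable_def
proof (rule integrableI_bounded)
  show "(\<lambda>x. indicator {a..b} x *\<^sub>R f x) \<in> borel_measurable lborel" by measurable
  have pm[measurable]: "(\<lambda>x. \<phi> \<bar>c * f x\<bar>) \<in> borel_measurable borel"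
    using measurable_compose[OF _ phi_abs_meas[OF phi(1)], of "\<lambda>x. c * f x"] by simp
  have p0: "\<phi> 0 = 0" and p1: "\<phi> 1 > 0" using phi(1) unfolding phi_function_def by auto
  have pt: "\<bar>f x\<bar> \<le> 1 / c + \<phi> \<bar>c * f x\<bar> / (c * \<phi> 1)" for x
  proof (cases "\<bar>c * f x\<bar> \<le> 1")
    case True
    then have "\<bar>f x\<bar> \<le> 1 / c" using c by (simp add: abs_mult field_simps)
    moreover have "0 \<le> \<phi> \<bar>c * f x\<bar> / (c * \<phi> 1)"
      using phi_nonneg[OF phi(1)] c p1 by simp
    ultimately show ?thesis by linarith
  next
    case False
    then have "\<bar>c * f x\<bar> * \<phi> 1 \<le> \<phi> \<bar>c * f x\<bar>"
      using convex_lin_lower[OF phi(2) p0] by simp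
    then have "\<bar>f x\<bar> \<le> \<phi> \<bar>c * f x\<bar> / (c * \<phi> 1)"
      using c p1 by (simp add: abs_mult field_simps)
    moreover have "0 \<le> 1 / c" using c by simp
    ultimately show ?thesis by linarith
  qed
  have "(\<integral>\<^sup>+x. ennreal (norm (indicator {a..b} x *\<^sub>R f x)) \<partial>lborel)
      \<le> (\<integral>\<^sup>+x. ennreal (1 / c) * indicator {a..b} x + ennreal (1 / (c * \<phi> 1)) * ennreal (\<phi> \<bar>c * f x\<bar>) \<partial>lborel)"
  proof (rule nn_integral_mono)
    fix x
    have A: "norm (indicator {a..b} x *\<^sub>R f x) \<le> (1 / c) * indicator {a..b} x + (1 / (c * \<phi> 1)) * \<phi> \<bar>c * f x\<bar>"
      using pt[of x] phi_nonneg[OF phi(1), of "\<bar>c * f x\<bar>"] c p1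
      by (cases "x \<in> {a..b}") simp_all
    have "ennreal (norm (indicator {a..b} x *\<^sub>R f x)) \<le> ennreal ((1 / c) * indicator {a..b} x + (1 / (c * \<phi> 1)) * \<phi> \<bar>c * f x\<bar>)"
      by (rule ennreal_leI[OF A])
    also have "\<dots> = ennreal (1 / c) * indicator {a..b} x + ennreal (1 / (c * \<phi> 1)) * ennreal (\<phi> \<bar>c * f x\<bar>)"
      using c p1 phi_nonneg[OF phi(1), of "\<bar>c * f x\<bar>"]
      by (cases "x \<in> {a..b}") (simp_all add: ennreal_plus ennreal_mult[symmetric])
    finally show "ennreal (norm (indicator {a..b} x *\<^sub>R f x)) \<le> ennreal (1 / c) * indicator {a..b} x + ennreal (1 / (c * \<phi> 1)) * ennreal (\<phi> \<bar>c * f x\<bar>)" .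
  qed
  also have "\<dots> = ennreal (1 / c) * ennreal (b - a) + ennreal (1 / (c * \<phi> 1)) * (\<integral>\<^sup>+x. ennreal (\<phi> \<bar>c * f x\<bar>) \<partial>lborel)"
    using ab by (subst nn_integral_add) (auto simp: nn_integral_cmult)
  also have "\<dots> < \<infinity>" using fin by (simp add: ennreal_mult_less_top)
  finally show "(\<integral>\<^sup>+x. ennreal (norm (indicator {a..b} x *\<^sub>R f x)) \<partial>lborel) < \<infinity>" .
qed

lemma jensen_avg:
  fixes F q :: "real \<Rightarrow> real"
  assumes ab: "a < b" and F[measurable]: "F \<in> borel_measurable borel"
    and Fi: "set_integrable lborel {a..b} F"
    and q: "convex_on UNIV q" and qm[measurable]: "q \<in> borel_measurable borel" and q0: "\<And>v. 0 \<le> q v"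
  shows "ennreal (q ((LINT u:{a..b}|lborel. F u) / (b - a)))
     \<le> ennreal (1 / (b - a)) * (\<integral>\<^sup>+u. indicator {a..b} u * ennreal (q (F u)) \<partial>lborel)"
proof -
  define d where "d u = indicator {a..b} u / (b - a)" for u :: real
  have dm[measurable]: "d \<in> borel_measurable borel" unfolding d_def by measurable
  have d0: "0 \<le> d u" for u using ab by (simp add: d_def)
  have de: "ennreal (d u) = ennreal (1 / (b - a)) * indicator {a..b} u" for u
    by (simp add: d_def indicator_def)
  define P where "P = density lborel (\<lambda>u. ennreal (d u))"
  have "emeasure P (space P) = (\<integral>\<^sup>+u. ennreal (d u) \<partial>lborel)"
    unfolding P_def by (subst emeasure_density) auto
  also have "\<dots> = ennreal (1 / (b - a)) * emeasure lborel {a..b}"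
    unfolding de by (rule nn_integral_cmult_indicator) simp
  also have "\<dots> = 1" using ab by (simp add: ennreal_mult[symmetric])
  finally interpret P: prob_space P by (rule prob_spaceI)
  define I where "I = (\<integral>\<^sup>+u. indicator {a..b} u * ennreal (q (F u)) \<partial>lborel)"
  show ?thesis
  proof (cases "I = \<infinity>")
    case True
    then show ?thesis using ab by (simp add: I_def[symmetric] ennreal_mult_top)
  next
    case False
    have Iq: "(\<integral>\<^sup>+u. ennreal (d u * q (F u)) \<partial>lborel) = ennreal (1 / (b - a)) * I"
      unfolding I_def using d0 q0
      by (subst nn_integral_cmult[symmetric]) (auto intro!: nn_integral_cong simp: ennreal_mult de mult.assoc)
    have i1: "integrable lborel (\<lambda>u. d u * q (F u))"
    proof (rule integrableI_bounded)
      show "(\<lambda>u. d u * q (F u)) \<in> borel_measurable lborel" by measurable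
      have "(\<integral>\<^sup>+u. ennreal (norm (d u * q (F u))) \<partial>lborel) = ennreal (1 / (b - a)) * I"
        using d0 q0 by (simp add: abs_mult Iq[symmetric])
      also have "\<dots> < \<infinity>" using False by (simp add: ennreal_mult_less_top top.not_eq_extremum)
      finally show "(\<integral>\<^sup>+u. ennreal (norm (d u * q (F u))) \<partial>lborel) < \<infinity>" .
    qed
    have iq: "integrable P (\<lambda>u. q (F u))"
      unfolding P_def using d0 i1 by (subst integrable_density) auto
    have i2: "integrable lborel (\<lambda>u. d u * F u)"
    proof -
      have "integrable lborel (\<lambda>u. (1 / (b - a)) * (indicator {a..b} u *\<^sub>R F u))"
        using Fi unfolding set_integrable_def by (rule integrable_mult_right)
      then show ?thesis by (simp add: d_def mult.assoc)
    qed
    have iF: "integrable P F"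
      unfolding P_def using d0 i2 by (subst integrable_density) auto
    have J: "q (P.expectation F) \<le> P.expectation (\<lambda>u. q (F u))"
      by (rule P.jensens_inequality[of F UNIV 0 0 q]) (use iF iq q in auto)
    have EF: "P.expectation F = (LINT u:{a..b}|lborel. F u) / (b - a)"
    proof -
      have "P.expectation F = integral\<^sup>L lborel (\<lambda>u. d u * F u)"
        unfolding P_def using d0 by (subst integral_density) auto
      also have "\<dots> = integral\<^sup>L lborel (\<lambda>u. (1 / (b - a)) * (indicator {a..b} u *\<^sub>R F u))"
        by (simp add: d_def mult.assoc)
      also have "\<dots> = (LINT u:{a..b}|lborel. F u) / (b - a)"
        unfolding set_lebesgue_integral_def by simp
      finally show ?thesis .
    qed
    have Eq: "ennreal (P.expectation (\<lambda>u. q (F u))) = ennreal (1 / (b - a)) * I"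
    proof -
      have "P.expectation (\<lambda>u. q (F u)) = integral\<^sup>L lborel (\<lambda>u. d u * q (F u))"
        unfolding P_def using d0 by (subst integral_density) auto
      then show ?thesis
        using Iq nn_integral_eq_integral[OF i1] d0 q0 by simp
    qed
    show ?thesis using J unfolding EF I_def[symmetric] Eq[symmetric] by (rule ennreal_leI)
  qed
qed



lemma S_finite:
  assumes n: "n \<ge> 1"
  shows "S_op n g w f x = (\<Sum>i\<le>n. bspline n (w * x - real_of_int (\<lceil>w * x - real n / 2\<rceil> + int i)) *
     g w (w * (LINT u:{real_of_int (\<lceil>w * x - real n / 2\<rceil> + int i) / w .. (real_of_int (\<lceil>w * x - real n / 2\<rceil> + int i) + 1) / w}|lebesgue. f u)))"
proof -
  define k0 where "k0 = \<lceil>w * x - real n / 2\<rceil>"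
  define h where "h k = bspline n (w * x - real_of_int k) *
       g w (w * (LINT u:{real_of_int k / w .. (real_of_int k + 1) / w}|lebesgue. f u))" for k :: int
  define F where "F = (\<lambda>i. k0 + int i) ` {..n}"
  have hz: "h k = 0" if "k \<notin> F" for k
  proof -
    have "k < k0 \<or> k > k0 + int n"
    proof (rule ccontr)
      assume "\<not> (k < k0 \<or> k > k0 + int n)"
      then have "k = k0 + int (nat (k - k0))" "nat (k - k0) \<in> {..n}" by auto
      then have "k \<in> F" unfolding F_def by blast
      then show False using that by simp
    qed
    then show ?thesis
    proof
      assume "k < k0"
      then have "real_of_int k \<le> real_of_int k0 - 1" by linarith
      moreover have "real_of_int k0 < w * x - real n / 2 + 1" unfolding k0_def by linarith
      ultimately have "w * x - real_of_int k > real n / 2" by linarith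
      then show ?thesis unfolding h_def using bspline_zero_right[OF n] by simp
    next
      assume "k > k0 + int n"
      then have "real_of_int k \<ge> real_of_int k0 + real n + 1" by linarith
      moreover have "real_of_int k0 \<ge> w * x - real n / 2" unfolding k0_def by linarith
      ultimately have "w * x - real_of_int k < - real n / 2" by linarith
      then show ?thesis unfolding h_def using bspline_zero_left by simp
    qed
  qed
  have "S_op n g w f x = infsum h UNIV" unfolding S_op_def h_def by simp
  also have "\<dots> = infsum h F"
    by (rule infsum_cong_neutral) (use hz in auto)
  also have "\<dots> = sum h F" unfolding F_def by simp
  also have "\<dots> = (\<Sum>i\<le>n. h (k0 + int i))"
    unfolding F_def by (subst sum.reindex) (auto simp: inj_on_def)
  finally show ?thesis unfolding h_def k0_def .
qed



lemma pointwise: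
  fixes \<phi> \<eta> \<psi> f' :: "real \<Rightarrow> real" and g :: "real \<Rightarrow> real \<Rightarrow> real"
  assumes n: "n \<ge> 1"
   and psi: "phi_function \<psi>"
   and g_lip: "\<forall>w>0. \<forall>u v. \<bar>g w u - g w v\<bar> \<le> \<psi> \<bar>u - v\<bar>"
   and g_zero: "\<forall>w>0. g w 0 = 0"
   and grate: "\<forall>u. u \<noteq> 0 \<longrightarrow> \<bar>g w u / u - 1\<bar> \<le> C' * w powr (- \<theta>)"
   and C'0: "C' \<ge> 0"
   and phi: "phi_function \<phi>" "convex_on {0..} \<phi>"
   and eta: "phi_function \<eta>" "convex_on {0..} \<eta>"
   and Cl: "0 < Cl" "\<forall>u\<ge>0. \<phi> (Cl * \<psi> u) \<le> \<eta> (\<epsilon> * l * u)"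
   and eps: "0 < \<epsilon>" "\<epsilon> \<le> 1" and l: "0 < l" and th: "0 < \<theta>"
   and w: "1 \<le> w"
   and f'm[measurable]: "f' \<in> borel_measurable borel"
   and lint: "\<And>a b. a \<le> b \<Longrightarrow> set_integrable lborel {a..b} f'"
   and R: "R = real n / 2 + 2"
   and mu: "\<mu> = Cl / (2 * (2^n * real n^(n-1)) * (real n + 1))"
  shows "ennreal (\<phi> \<bar>\<mu> * (S_op n g w f' x - f' x)\<bar>)
     \<le> ennreal (\<epsilon> / 2 * w) * (\<integral>\<^sup>+t. ennreal (indicator {-(R/w)..R/w} t) * ennreal (\<eta> \<bar>l * (f' (x + t) - f' x)\<bar>) \<partial>lborel)
       + ennreal (1/3 * w powr (- \<theta>) * \<phi> \<bar>3 * \<mu> * C' * f' x\<bar>)"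
proof -
  define B where "B = 2^n * real n^(n-1)"
  have B1: "B \<ge> 1"
  proof -
    have a: "1 \<le> (2::real)^n" by simp
    have b: "1 \<le> real n^(n-1)" using n by simp
    show ?thesis unfolding B_def using mult_mono[OF a b] by simp
  qed
  have w0: "w > 0" using w by simp
  define k0 where "k0 = \<lceil>w * x - real n / 2\<rceil>"
  define kk where "kk i = real_of_int (k0 + int i)" for i
  define M where "M i = bspline n (w * x - kk i)" for i
  define A where "A i = w * (LINT u:{kk i / w .. (kk i + 1) / w}|lebesgue. f' u)" for i
  define y where "y = f' x"
  define \<delta> where "\<delta> = R / w"
  define J where "J = (\<integral>\<^sup>+t. ennreal (indicator {-\<delta>..\<delta>} t) * ennreal (\<eta> \<bar>l * (f' (x + t) - f' x)\<bar>) \<partial>lborel)"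
  define T1 where "T1 = (\<Sum>i\<le>n. M i * (g w (A i) - g w y))"
  define T2 where "T2 = g w y - y"
  have kk1: "kk i \<ge> w * x - real n / 2" for i unfolding kk_def k0_def by simp linarith
  have kk2: "kk i \<le> w * x + real n / 2 + 1" if "i \<le> n" for i
    unfolding kk_def k0_def using that by simp linarith
  have Sfin: "S_op n g w f' x = (\<Sum>i\<le>n. M i * g w (A i))"
    unfolding S_finite[OF n] M_def A_def kk_def k0_def ..
  have part: "(\<Sum>i\<le>n. M i) = 1"
    unfolding M_def kk_def k0_def by (rule bspline_partition[OF n])
  have dec: "S_op n g w f' x - f' x = T1 + T2"
  proof -
    have "T1 = (\<Sum>i\<le>n. M i * g w (A i)) - (\<Sum>i\<le>n. M i) * g w y"
      unfolding T1_def by (simp add: right_diff_distrib sum_subtractf sum_distrib_right)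
    then show ?thesis unfolding Sfin T2_def y_def part by simp
  qed
  have mu0: "\<mu> > 0" unfolding mu using Cl B1 B_def by simp
  have mu2: "2 * \<mu> * B * (real n + 1) = Cl"
  proof -
    have "2 * B * (real n + 1) > 0" using B1 by simp
    then show ?thesis unfolding mu[folded B_def] by (simp add: field_simps)
  qed
  have psi0: "0 \<le> \<psi> u" if "0 \<le> u" for u using phi_nonneg[OF psi that] .
  have Mb: "\<bar>M i\<bar> \<le> B" for i
    unfolding M_def B_def by (rule bspline_bound) (use kk1[of i] in linarith)
  have gl: "\<bar>g w (A i) - g w y\<bar> \<le> \<psi> \<bar>A i - y\<bar>" for i using g_lip w0 by blast
  have T1b: "\<bar>T1\<bar> \<le> B * (\<Sum>i\<le>n. \<psi> \<bar>A i - y\<bar>)"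
  proof -
    have "\<bar>T1\<bar> \<le> (\<Sum>i\<le>n. \<bar>M i * (g w (A i) - g w y)\<bar>)" unfolding T1_def by (rule sum_abs)
    also have "\<dots> \<le> (\<Sum>i\<le>n. B * \<psi> \<bar>A i - y\<bar>)"
      unfolding abs_mult by (intro sum_mono mult_mono Mb gl) (use B1 in auto)
    finally show ?thesis by (simp add: sum_distrib_left)
  qed
  have wth0: "0 \<le> w powr (- \<theta>)" by simp
  have wth1: "w powr (- \<theta>) \<le> 1"
    using powr_mono[of "- \<theta>" 0 w] w th by simp
  have T2b: "\<bar>T2\<bar> \<le> C' * w powr (- \<theta>) * \<bar>y\<bar>"
  proof (cases "y = 0")
    case True then show ?thesis unfolding T2_def using g_zero w0 by simp
  next
    case False
    have "\<bar>T2\<bar> = \<bar>y\<bar> * \<bar>g w y / y - 1\<bar>"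
      unfolding T2_def using False by (simp add: abs_mult[symmetric] field_simps)
    also have "\<dots> \<le> \<bar>y\<bar> * (C' * w powr (- \<theta>))"
      using grate False by (intro mult_left_mono) auto
    finally show ?thesis by (simp add: mult_ac)
  qed
  have p0: "\<phi> 0 = 0" using phi(1) unfolding phi_function_def by simp
  have e0: "\<eta> 0 = 0" using eta(1) unfolding phi_function_def by simp
  have main: "\<phi> \<bar>\<mu> * (S_op n g w f' x - f' x)\<bar>
     \<le> (\<Sum>i\<le>n. \<epsilon> / (2 * (real n + 1)) * \<eta> (l * \<bar>A i - y\<bar>)) + 1/3 * w powr (- \<theta>) * \<phi> \<bar>3 * \<mu> * C' * f' x\<bar>"
  proof -
    have s1: "\<bar>\<mu> * (T1 + T2)\<bar> \<le> (1 - 1/2) * (2 * \<mu> * \<bar>T1\<bar>) + (1/2) * (2 * \<mu> * \<bar>T2\<bar>)"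
      using mu0 by (simp add: abs_mult distrib_left[symmetric] abs_triangle_ineq)
    have "\<phi> \<bar>\<mu> * (T1 + T2)\<bar> \<le> \<phi> ((1 - 1/2) *\<^sub>R (2 * \<mu> * \<bar>T1\<bar>) + (1/2) *\<^sub>R (2 * \<mu> * \<bar>T2\<bar>))"
      using s1 by (intro phi_mono[OF phi(1)]) auto
    also have "\<dots> \<le> (1 - 1/2) * \<phi> (2 * \<mu> * \<bar>T1\<bar>) + (1/2) * \<phi> (2 * \<mu> * \<bar>T2\<bar>)"
      using mu0 by (intro convex_onD[OF phi(2)]) auto
    finally have s2: "\<phi> \<bar>\<mu> * (T1 + T2)\<bar> \<le> (1/2) * \<phi> (2 * \<mu> * \<bar>T1\<bar>) + (1/2) * \<phi> (2 * \<mu> * \<bar>T2\<bar>)" by simp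
    have "2 * \<mu> * \<bar>T1\<bar> \<le> 2 * \<mu> * (B * (\<Sum>i\<le>n. \<psi> \<bar>A i - y\<bar>))"
      using T1b mu0 by simp
    also have "\<dots> = (\<Sum>i\<le>n. (2 * \<mu> * B) * \<psi> \<bar>A i - y\<bar>)"
      by (simp add: sum_distrib_left mult_ac)
    also have "\<dots> = (\<Sum>i\<le>n. (1 / (real n + 1)) *\<^sub>R (Cl * \<psi> \<bar>A i - y\<bar>))"
    proof -
      have "2 * \<mu> * B = Cl / (real n + 1)" using mu2 by (simp add: field_simps)
      then show ?thesis by simp
    qed
    finally have s3: "2 * \<mu> * \<bar>T1\<bar> \<le> (\<Sum>i\<le>n. (1 / (real n + 1)) *\<^sub>R (Cl * \<psi> \<bar>A i - y\<bar>))" .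
    have "\<phi> (2 * \<mu> * \<bar>T1\<bar>) \<le> \<phi> (\<Sum>i\<le>n. (1 / (real n + 1)) *\<^sub>R (Cl * \<psi> \<bar>A i - y\<bar>))"
      using s3 mu0 by (intro phi_mono[OF phi(1)]) auto
    also have "\<dots> \<le> (\<Sum>i\<le>n. (1 / (real n + 1)) * \<phi> (Cl * \<psi> \<bar>A i - y\<bar>))"
      by (rule convex_on_sum[OF _ _ phi(2)]) (use Cl psi0 in auto)
    also have "\<dots> \<le> (\<Sum>i\<le>n. (1 / (real n + 1)) * (\<epsilon> * \<eta> (l * \<bar>A i - y\<bar>)))"
    proof (intro sum_mono mult_left_mono)
      fix i
      have "\<phi> (Cl * \<psi> \<bar>A i - y\<bar>) \<le> \<eta> (\<epsilon> * (l * \<bar>A i - y\<bar>))"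
        using Cl(2) by (simp add: mult.assoc)
      also have "\<dots> \<le> \<epsilon> * \<eta> (l * \<bar>A i - y\<bar>)"
        using eps l by (intro convex_scale[OF eta(2) e0]) auto
      finally show "\<phi> (Cl * \<psi> \<bar>A i - y\<bar>) \<le> \<epsilon> * \<eta> (l * \<bar>A i - y\<bar>)" .
    qed simp
    finally have s4: "\<phi> (2 * \<mu> * \<bar>T1\<bar>) \<le> (\<Sum>i\<le>n. (1 / (real n + 1)) * (\<epsilon> * \<eta> (l * \<bar>A i - y\<bar>)))" .
    have "2 * \<mu> * \<bar>T2\<bar> \<le> (2/3 * w powr (- \<theta>)) * \<bar>3 * \<mu> * C' * f' x\<bar>"
      using T2b mu0 C'0 unfolding y_def by (simp add: abs_mult field_simps)
    then have "\<phi> (2 * \<mu> * \<bar>T2\<bar>) \<le> \<phi> ((2/3 * w powr (- \<theta>)) * \<bar>3 * \<mu> * C' * f' x\<bar>)"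
      using mu0 by (intro phi_mono[OF phi(1)]) auto
    also have "\<dots> \<le> (2/3 * w powr (- \<theta>)) * \<phi> \<bar>3 * \<mu> * C' * f' x\<bar>"
      using wth0 wth1 by (intro convex_scale[OF phi(2) p0]) auto
    finally have s5: "\<phi> (2 * \<mu> * \<bar>T2\<bar>) \<le> (2/3 * w powr (- \<theta>)) * \<phi> \<bar>3 * \<mu> * C' * f' x\<bar>" .
    have "\<phi> \<bar>\<mu> * (S_op n g w f' x - f' x)\<bar> \<le> (1/2) * (\<Sum>i\<le>n. (1 / (real n + 1)) * (\<epsilon> * \<eta> (l * \<bar>A i - y\<bar>)))
        + (1/2) * ((2/3 * w powr (- \<theta>)) * \<phi> \<bar>3 * \<mu> * C' * f' x\<bar>)"
      unfolding dec using s2 s4 s5 by linarith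
    also have "\<dots> = (\<Sum>i\<le>n. \<epsilon> / (2 * (real n + 1)) * \<eta> (l * \<bar>A i - y\<bar>)) + 1/3 * w powr (- \<theta>) * \<phi> \<bar>3 * \<mu> * C' * f' x\<bar>"
      by (simp add: sum_distrib_left field_simps)
    finally show ?thesis .
  qed
  have etamono: "mono_on {0..} \<eta>" using eta(1) unfolding phi_function_def by simp
  have qm[measurable]: "(\<lambda>v. \<eta> \<bar>v\<bar>) \<in> borel_measurable borel" by (rule phi_abs_meas[OF eta(1)])
  have Gm[measurable]: "(\<lambda>u. \<eta> \<bar>l * (f' u - y)\<bar>) \<in> borel_measurable borel"
    using measurable_compose[OF _ qm, of "\<lambda>u. l * (f' u - y)"] by simp
  have qc: "convex_on UNIV (\<lambda>v. \<eta> \<bar>v\<bar>)" by (rule convex_abs_comp[OF eta(2) etamono])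
  have q0: "0 \<le> \<eta> \<bar>v\<bar>" for v using phi_nonneg[OF eta(1)] by simp
  have Jeq: "(\<integral>\<^sup>+u. indicator {x - \<delta>..x + \<delta>} u * ennreal (\<eta> \<bar>l * (f' u - y)\<bar>) \<partial>lborel) = J"
  proof -
    have "(\<integral>\<^sup>+u. indicator {x - \<delta>..x + \<delta>} u * ennreal (\<eta> \<bar>l * (f' u - y)\<bar>) \<partial>lborel)
       = ennreal \<bar>1\<bar> * (\<integral>\<^sup>+t. indicator {x - \<delta>..x + \<delta>} (x + 1 * t) * ennreal (\<eta> \<bar>l * (f' (x + 1 * t) - y)\<bar>) \<partial>lborel)"
      by (rule nn_integral_real_affine) auto
    also have "\<dots> = J" unfolding J_def y_def
      by (simp, intro nn_integral_cong) (auto simp: indicator_def)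
    finally show ?thesis .
  qed
  have jen: "ennreal (\<eta> (l * \<bar>A i - y\<bar>)) \<le> ennreal w * J" if i: "i \<le> n" for i
  proof -
    define a where "a = kk i / w"
    define b where "b = (kk i + 1) / w"
    have ab: "a < b" unfolding a_def b_def using w0 by (simp add: divide_strict_right_mono)
    have bma: "b - a = 1 / w" unfolding a_def b_def using w0 by (simp add: field_simps)
    have ai: "x - \<delta> \<le> a"
    proof -
      have "w * x - R \<le> kk i" using kk1[of i] R by simp
      then have "(w * x - R) / w \<le> kk i / w" using w0 by (intro divide_right_mono) auto
      moreover have "(w * x - R) / w = x - \<delta>" unfolding \<delta>_def using w0 by (simp add: field_simps)
      ultimately show ?thesis unfolding a_def by simp
    qed
    have bi: "b \<le> x + \<delta>"
    proof -
      have "kk i + 1 \<le> w * x + R" using kk2[OF i] R by simp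
      then have "(kk i + 1) / w \<le> (w * x + R) / w" using w0 by (intro divide_right_mono) auto
      moreover have "(w * x + R) / w = x + \<delta>" unfolding \<delta>_def using w0 by (simp add: field_simps)
      ultimately show ?thesis unfolding b_def by simp
    qed
    have fi: "set_integrable lborel {a..b} f'" using lint ab by simp
    have ci: "set_integrable lborel {a..b} (\<lambda>_. y)"
      by (rule borel_integrable_atLeastAtMost') (rule continuous_on_const)
    have Fi: "set_integrable lborel {a..b} (\<lambda>u. l * (f' u - y))"
      using set_integral_diff(1)[OF fi ci] by simp
    have Aeq: "A i = w * (LINT u:{a..b}|lborel. f' u)"
      unfolding A_def a_def b_def set_lebesgue_integral_def
      by (subst integral_completion) auto
    have LI: "(LINT u:{a..b}|lborel. l * (f' u - y)) / (b - a) = l * (A i - y)"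
    proof -
      have "(LINT u:{a..b}|lborel. l * (f' u - y)) = l * ((LINT u:{a..b}|lborel. f' u) - (LINT u:{a..b}|lborel. y))"
        using set_integral_diff(2)[OF fi ci] by simp
      also have "(LINT u:{a..b}|lborel. y) = (b - a) * y"
        using ab by (subst set_integral_const) auto
      finally show ?thesis unfolding Aeq bma using w0 by (simp add: field_simps)
    qed
    have "ennreal (\<eta> \<bar>(LINT u:{a..b}|lborel. l * (f' u - y)) / (b - a)\<bar>)
       \<le> ennreal (1 / (b - a)) * (\<integral>\<^sup>+u. indicator {a..b} u * ennreal (\<eta> \<bar>l * (f' u - y)\<bar>) \<partial>lborel)"
      by (rule jensen_avg[OF ab _ Fi qc qm q0]) simp
    also have "\<dots> \<le> ennreal (1 / (b - a)) * (\<integral>\<^sup>+u. indicator {x - \<delta>..x + \<delta>} u * ennreal (\<eta> \<bar>l * (f' u - y)\<bar>) \<partial>lborel)"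
      using ai bi by (intro mult_left_mono nn_integral_mono) (auto simp: indicator_def)
    finally have X: "ennreal (\<eta> \<bar>(LINT u:{a..b}|lborel. l * (f' u - y)) / (b - a)\<bar>)
       \<le> ennreal (1 / (b - a)) * (\<integral>\<^sup>+u. indicator {x - \<delta>..x + \<delta>} u * ennreal (\<eta> \<bar>l * (f' u - y)\<bar>) \<partial>lborel)" .
    have e1: "\<eta> \<bar>(LINT u:{a..b}|lborel. l * (f' u - y)) / (b - a)\<bar> = \<eta> (l * \<bar>A i - y\<bar>)"
      using LI l by (simp add: abs_mult)
    have e2: "ennreal (1 / (b - a)) = ennreal w" unfolding bma by simp
    show ?thesis using X unfolding e1 e2 Jeq .
  qed
  define c1 where "c1 = \<epsilon> / (2 * (real n + 1))"
  define c2 where "c2 = 1/3 * w powr (- \<theta>) * \<phi> \<bar>3 * \<mu> * C' * f' x\<bar>"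
  have c1p: "0 \<le> c1" unfolding c1_def using eps by simp
  have c2p: "0 \<le> c2" unfolding c2_def using phi_nonneg[OF phi(1)] by simp
  have etan: "0 \<le> \<eta> (l * \<bar>A i - y\<bar>)" for i using phi_nonneg[OF eta(1)] l by simp
  have "ennreal (\<phi> \<bar>\<mu> * (S_op n g w f' x - f' x)\<bar>) \<le> ennreal ((\<Sum>i\<le>n. c1 * \<eta> (l * \<bar>A i - y\<bar>)) + c2)"
    unfolding c1_def c2_def by (rule ennreal_leI[OF main])
  also have "\<dots> = (\<Sum>i\<le>n. ennreal c1 * ennreal (\<eta> (l * \<bar>A i - y\<bar>))) + ennreal c2"
  proof -
    have "(\<Sum>i\<le>n. ennreal c1 * ennreal (\<eta> (l * \<bar>A i - y\<bar>))) = (\<Sum>i\<le>n. ennreal (c1 * \<eta> (l * \<bar>A i - y\<bar>)))"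
      using c1p etan by (simp add: ennreal_mult)
    also have "\<dots> = ennreal (\<Sum>i\<le>n. c1 * \<eta> (l * \<bar>A i - y\<bar>))"
      using c1p etan by (intro sum_ennreal) simp
    finally show ?thesis using c1p c2p etan by (simp add: ennreal_plus sum_nonneg)
  qed
  also have "\<dots> \<le> (\<Sum>i\<le>n. ennreal c1 * (ennreal w * J)) + ennreal c2"
    by (intro add_right_mono sum_mono mult_left_mono jen) auto
  also have "(\<Sum>i\<le>n. ennreal c1 * (ennreal w * J)) = ennreal (\<epsilon> / 2 * w) * J"
  proof -
    have "(\<Sum>i\<le>n. ennreal c1 * (ennreal w * J)) = of_nat (Suc n) * (ennreal c1 * (ennreal w * J))" by simp
    also have "\<dots> = ennreal (real (Suc n) * c1 * w) * J"
      using c1p w0 by (simp add: ennreal_mult ennreal_of_nat_eq_real_of_nat mult_ac)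
    also have "real (Suc n) * c1 * w = \<epsilon> / 2 * w" unfolding c1_def by (simp add: field_simps)
    finally show ?thesis .
  qed
  finally show ?thesis unfolding J_def \<delta>_def c2_def by simp
qed



lemma div3_ennreal: "(X::ennreal) / 3 = X * ennreal (1/3)"
proof -
  have "inverse (3::ennreal) = ennreal (1/3)"
    using inverse_ennreal[of 3] by (simp add: ennreal_numeral[symmetric] del: ennreal_numeral)
  then show ?thesis by (simp add: divide_ennreal_def)
qed

theorem corollary4p2:
  fixes n :: nat and g :: "real \<Rightarrow> real \<Rightarrow> real" and \<psi> \<phi> \<eta> :: "real \<Rightarrow> real"
    and \<theta>\<^sub>0 :: real and f :: "real \<Rightarrow> real"
  assumes n: "n \<ge> 1"
    and g_unif: "\<forall>\<epsilon>>0. \<exists>W. \<forall>w\<ge>W. \<forall>u. \<bar>g w u - u\<bar> < \<epsilon>"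
    and g_zero: "\<forall>w>0. g w 0 = 0"
    and psi: "phi_function \<psi>"
    and g_lip: "\<forall>w>0. \<forall>u v. \<bar>g w u - g w v\<bar> \<le> \<psi> \<bar>u - v\<bar>"
    and theta: "\<theta>\<^sub>0 > 0"
    and g_rate: "\<exists>C W. \<forall>w\<ge>W. \<forall>u. u \<noteq> 0 \<longrightarrow> \<bar>g w u / u - 1\<bar> \<le> C * w powr (- \<theta>\<^sub>0)"
    and phi: "phi_function \<phi>" "convex_on {0..} \<phi>"
    and eta: "phi_function \<eta>" "convex_on {0..} \<eta>"
    and H: "condH \<phi> \<psi> \<eta>"
    and f: "f \<in> orlicz (\<lambda>u. \<phi> u + \<eta> u)"
  shows "\<forall>\<alpha>. 0 < \<alpha> \<and> \<alpha> < 1 \<longrightarrow>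
    (\<exists>\<mu>>0. \<exists>c\<^sub>0>0. \<exists>l>0. \<forall>\<^sub>F w in at_top.
       modular \<phi> (\<lambda>x. \<mu> * (S_op n g w f x - f x))
       \<le> modulus \<eta> l f (1 / w powr \<alpha>) / 3 + modulus \<eta> l f (1 / w) / 3
          + modular \<phi> (\<lambda>x. c\<^sub>0 * f x) / 3 * ennreal (w powr (- \<theta>\<^sub>0)))"
proof (intro allI impI)
  fix \<alpha> :: real assume \<alpha>: "0 < \<alpha> \<and> \<alpha> < 1"
  obtain Cg Wg where grate: "\<forall>w\<ge>Wg. \<forall>u. u \<noteq> 0 \<longrightarrow> \<bar>g w u / u - 1\<bar> \<le> Cg * w powr (- \<theta>\<^sub>0)"
    using g_rate by blast
  define C' where "C' = max Cg 1"
  have C'0: "C' \<ge> 1" "Cg \<le> C'" unfolding C'_def by auto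
  have fmeas: "f \<in> borel_measurable lebesgue" using f unfolding orlicz_def by simp
  obtain cf where cf: "cf > 0" "modular (\<lambda>u. \<phi> u + \<eta> u) (\<lambda>x. cf * f x) < \<infinity>"
    using f unfolding orlicz_def by blast
  obtain f' where f'm: "f' \<in> borel_measurable lborel" and ae: "AE x in lborel. f x = f' x"
    using completion_ex_borel_measurable_real[OF fmeas] by blast
  have f'b[measurable]: "f' \<in> borel_measurable borel" using f'm by simp
  have finphi: "(\<integral>\<^sup>+x. ennreal (\<phi> \<bar>cf * f' x\<bar>) \<partial>lborel) < \<infinity>"
  proof -
    have "(\<integral>\<^sup>+x. ennreal (\<phi> \<bar>cf * f' x\<bar>) \<partial>lborel) \<le> (\<integral>\<^sup>+x. ennreal (\<phi> \<bar>cf * f x\<bar> + \<eta> \<bar>cf * f x\<bar>) \<partial>lborel)"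
      using ae by (intro nn_integral_mono_AE) (auto elim!: eventually_mono intro!: ennreal_leI simp: phi_nonneg[OF eta(1)])
    also have "\<dots> = modular (\<lambda>u. \<phi> u + \<eta> u) (\<lambda>x. cf * f x)"
      unfolding modular_def by (simp add: nn_integral_completion)
    also have "\<dots> < \<infinity>" by (rule cf(2))
    finally show ?thesis .
  qed
  have lint: "\<And>a b. a \<le> b \<Longrightarrow> set_integrable lborel {a..b} f'"
    by (rule local_int[OF phi cf(1) _ f'b finphi])
  define R where "R = real n / 2 + 2"
  define \<epsilon> where "\<epsilon> = 1 / (3 * R)"
  define l :: real where "l = 1/2"
  have R2: "R \<ge> 2" unfolding R_def by simp
  have eps: "0 < \<epsilon>" "\<epsilon> \<le> 1" unfolding \<epsilon>_def using R2 by (auto simp: field_simps)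
  have l0: "l > 0" unfolding l_def by simp
  have lin: "0 < \<epsilon> * l" "\<epsilon> * l < 1" using eps unfolding l_def by auto
  obtain Cl where Cl: "0 < Cl" "Cl < 1" "\<forall>u\<ge>0. \<phi> (Cl * \<psi> u) \<le> \<eta> (\<epsilon> * l * u)"
    using H lin unfolding condH_def by blast
  define \<mu> where "\<mu> = Cl / (2 * (2^n * real n^(n-1)) * (real n + 1))"
  have mu0: "\<mu> > 0" unfolding \<mu>_def using Cl n by simp
  define c0 where "c0 = 3 * \<mu> * C'"
  have c00: "c0 > 0" unfolding c0_def using mu0 C'0 by simp
  define W where "W = max (max 1 Wg) (R powr (1 / (1 - \<alpha>)))"
  have ev: "\<forall>\<^sub>F w in at_top.
       modular \<phi> (\<lambda>x. \<mu> * (S_op n g w f x - f x))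
       \<le> modulus \<eta> l f (1 / w powr \<alpha>) / 3 + modulus \<eta> l f (1 / w) / 3
          + modular \<phi> (\<lambda>x. c0 * f x) / 3 * ennreal (w powr (- \<theta>\<^sub>0))"
  proof (rule eventually_mono[OF eventually_ge_at_top[of W]])
    fix w assume wW: "W \<le> w"
    show "modular \<phi> (\<lambda>x. \<mu> * (S_op n g w f x - f x))
       \<le> modulus \<eta> l f (1 / w powr \<alpha>) / 3 + modulus \<eta> l f (1 / w) / 3
          + modular \<phi> (\<lambda>x. c0 * f x) / 3 * ennreal (w powr (- \<theta>\<^sub>0))"
    proof -
      have w1: "1 \<le> w" and wWg: "Wg \<le> w" and wR: "R powr (1 / (1 - \<alpha>)) \<le> w"
        using wW unfolding W_def by auto
      have w0: "0 < w" using w1 by simp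
      define \<delta> where "\<delta> = R / w"
      have d0: "0 \<le> \<delta>" unfolding \<delta>_def using R2 w0 by simp
      have dle: "\<delta> \<le> 1 / w powr \<alpha>"
      proof -
        have "R = (R powr (1 / (1 - \<alpha>))) powr (1 - \<alpha>)"
          using R2 \<alpha> by (simp add: powr_powr)
        also have "\<dots> \<le> w powr (1 - \<alpha>)"
          using wR \<alpha> by (intro powr_mono2) auto
        also have "\<dots> = w / w powr \<alpha>" using w0 by (simp add: powr_diff)
        finally have "R \<le> w / w powr \<alpha>" .
        then have "R / w \<le> (w / w powr \<alpha>) / w" using w0 by (intro divide_right_mono) auto
        then show ?thesis unfolding \<delta>_def using w0 by simp
      qed
      have gr: "\<forall>u. u \<noteq> 0 \<longrightarrow> \<bar>g w u / u - 1\<bar> \<le> C' * w powr (- \<theta>\<^sub>0)"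
      proof (intro allI impI)
        fix u :: real assume "u \<noteq> 0"
        then have "\<bar>g w u / u - 1\<bar> \<le> Cg * w powr (- \<theta>\<^sub>0)" using grate wWg by blast
        also have "\<dots> \<le> C' * w powr (- \<theta>\<^sub>0)" using C'0 by (intro mult_right_mono) auto
        finally show "\<bar>g w u / u - 1\<bar> \<le> C' * w powr (- \<theta>\<^sub>0)" .
      qed
      have PW: "ennreal (\<phi> \<bar>\<mu> * (S_op n g w f' x - f' x)\<bar>)
         \<le> ennreal (\<epsilon> / 2 * w) * (\<integral>\<^sup>+t. ennreal (indicator {-\<delta>..\<delta>} t) * ennreal (\<eta> \<bar>l * (f' (x + t) - f' x)\<bar>) \<partial>lborel)
           + ennreal (1/3 * w powr (- \<theta>\<^sub>0) * \<phi> \<bar>c0 * f' x\<bar>)" for x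
        unfolding \<delta>_def c0_def
        by (rule pointwise[OF n psi g_lip g_zero gr _ phi eta Cl(1) Cl(3) eps l0 theta w1 f'b lint R_def \<mu>_def])
           (use C'0 in auto)
      define \<Omega> where "\<Omega> = modulus \<eta> l f (1 / w powr \<alpha>)"
      have qm[measurable]: "(\<lambda>v. \<eta> \<bar>v\<bar>) \<in> borel_measurable borel" by (rule phi_abs_meas[OF eta(1)])
      have pm[measurable]: "(\<lambda>v. \<phi> \<bar>v\<bar>) \<in> borel_measurable borel" by (rule phi_abs_meas[OF phi(1)])
      define F where "F x t = ennreal (indicator {-\<delta>..\<delta>} t) * ennreal (\<eta> \<bar>l * (f' (x + t) - f' x)\<bar>)" for x t
      have m1: "(\<lambda>p::real \<times> real. l * (f' (fst p + snd p) - f' (fst p))) \<in> borel_measurable (lborel \<Otimes>\<^sub>M lborel)"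
        by measurable
      have m2: "(\<lambda>p::real \<times> real. \<eta> \<bar>l * (f' (fst p + snd p) - f' (fst p))\<bar>) \<in> borel_measurable (lborel \<Otimes>\<^sub>M lborel)"
        using measurable_compose[OF m1 qm] by simp
      have Fm: "case_prod F \<in> borel_measurable (lborel \<Otimes>\<^sub>M lborel)"
      proof -
        have "case_prod F = (\<lambda>p::real \<times> real. ennreal (indicator {-\<delta>..\<delta>} (snd p)) * ennreal (\<eta> \<bar>l * (f' (fst p + snd p) - f' (fst p))\<bar>))"
          unfolding F_def by (auto simp: case_prod_beta')
        also have "\<dots> \<in> borel_measurable (lborel \<Otimes>\<^sub>M lborel)" using m2 by measurable
        finally show ?thesis .
      qed
      have Hm: "(\<lambda>x. ennreal (\<eta> \<bar>l * (f' (x + t) - f' x)\<bar>)) \<in> borel_measurable lborel" for t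
      proof -
        have "(\<lambda>x. l * (f' (x + t) - f' x)) \<in> borel_measurable borel" by measurable
        from measurable_compose[OF this qm] show ?thesis by simp
      qed
      have P1: "(\<integral>\<^sup>+x. ennreal (\<eta> \<bar>l * (f' (x + t) - f' x)\<bar>) \<partial>lborel) \<le> \<Omega>" if t: "\<bar>t\<bar> \<le> \<delta>" for t
      proof -
        have "AE x in distr lborel borel ((+) t). f x = f' x" by (subst lborel_distr_plus) (rule ae)
        then have aet: "AE x in lborel. f (t + x) = f' (t + x)" by (rule AE_distrD[rotated]) simp
        have "modular \<eta> (\<lambda>x. l * (f (x + t) - f x)) = (\<integral>\<^sup>+x. ennreal (\<eta> \<bar>l * (f (x + t) - f x)\<bar>) \<partial>lborel)"
          unfolding modular_def by (simp add: nn_integral_completion)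
        also have "\<dots> = (\<integral>\<^sup>+x. ennreal (\<eta> \<bar>l * (f' (x + t) - f' x)\<bar>) \<partial>lborel)"
          apply (rule nn_integral_cong_AE) using AE_conjI[OF ae aet] by eventually_elim (simp add: add.commute)
        finally have eq: "(\<integral>\<^sup>+x. ennreal (\<eta> \<bar>l * (f' (x + t) - f' x)\<bar>) \<partial>lborel) = modular \<eta> (\<lambda>x. l * (f (x + t) - f x))" ..
        have "t \<in> {t. \<bar>t\<bar> \<le> 1 / w powr \<alpha>}" using t dle by simp
        then show ?thesis unfolding eq \<Omega>_def modulus_def by (rule SUP_upper)
      qed
      define T1 where "T1 = (\<integral>\<^sup>+x. (\<integral>\<^sup>+t. F x t \<partial>lborel) \<partial>lborel)"
      have T1b: "T1 \<le> \<Omega> * ennreal (2 * \<delta>)"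
      proof -
        have "T1 = (\<integral>\<^sup>+t. (\<integral>\<^sup>+x. F x t \<partial>lborel) \<partial>lborel)"
          unfolding T1_def by (rule lborel_pair.Fubini'[OF Fm, symmetric])
        also have "\<dots> = (\<integral>\<^sup>+t. ennreal (indicator {-\<delta>..\<delta>} t) * (\<integral>\<^sup>+x. ennreal (\<eta> \<bar>l * (f' (x + t) - f' x)\<bar>) \<partial>lborel) \<partial>lborel)"
          unfolding F_def by (intro nn_integral_cong nn_integral_cmult Hm)
        also have "\<dots> \<le> (\<integral>\<^sup>+t. \<Omega> * indicator {-\<delta>..\<delta>} t \<partial>lborel)"
        proof (intro nn_integral_mono)
          fix t
          show "ennreal (indicator {-\<delta>..\<delta>} t) * (\<integral>\<^sup>+x. ennreal (\<eta> \<bar>l * (f' (x + t) - f' x)\<bar>) \<partial>lborel) \<le> \<Omega> * indicator {-\<delta>..\<delta>} t"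
            using P1[of t] by (cases "t \<in> {-\<delta>..\<delta>}") (auto simp: abs_le_iff)
        qed
        also have "\<dots> = \<Omega> * emeasure lborel {-\<delta>..\<delta>}" by (rule nn_integral_cmult_indicator) simp
        also have "\<dots> = \<Omega> * ennreal (2 * \<delta>)" using d0 by simp
        finally show ?thesis .
      qed
      define T2 where "T2 = (\<integral>\<^sup>+x. ennreal (\<phi> \<bar>c0 * f' x\<bar>) \<partial>lborel)"
      have T2eq: "T2 = modular \<phi> (\<lambda>x. c0 * f x)"
        unfolding T2_def modular_def nn_integral_completion using ae
        by (intro nn_integral_cong_AE) (auto elim!: eventually_mono)
      have Seq: "S_op n g w f = S_op n g w f'"
      proof -
        have "(LINT u:A|lebesgue. f u) = (LINT u:A|lebesgue. f' u)" if "A \<in> sets borel" for A :: "real set"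
          unfolding set_lebesgue_integral_def
        proof (rule integral_cong_AE)
          have iA: "(indicator A :: real \<Rightarrow> real) \<in> borel_measurable lebesgue"
            using that by (intro borel_measurable_indicator) (simp add: sets_completionI_sets)
          show "(\<lambda>u. indicator A u *\<^sub>R f u) \<in> borel_measurable lebesgue"
            by (rule borel_measurable_scaleR[OF iA fmeas])
          have "f' \<in> borel_measurable lebesgue" using f'm by (rule measurable_completion)
          then show "(\<lambda>u. indicator A u *\<^sub>R f' u) \<in> borel_measurable lebesgue"
            by (rule borel_measurable_scaleR[OF iA])
          show "AE x in lebesgue. indicator A x *\<^sub>R f x = indicator A x *\<^sub>R f' x"
            using AE_completion[OF ae] by (auto elim!: eventually_mono)
        qed
        then show ?thesis unfolding S_op_def by (intro ext) simp
      qed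
      have "modular \<phi> (\<lambda>x. \<mu> * (S_op n g w f x - f x)) = (\<integral>\<^sup>+x. ennreal (\<phi> \<bar>\<mu> * (S_op n g w f' x - f' x)\<bar>) \<partial>lborel)"
        unfolding modular_def nn_integral_completion Seq using ae
        by (intro nn_integral_cong_AE) (auto elim!: eventually_mono)
      also have "\<dots> \<le> (\<integral>\<^sup>+x. ennreal (\<epsilon> / 2 * w) * (\<integral>\<^sup>+t. F x t \<partial>lborel) + ennreal (1/3 * w powr (- \<theta>\<^sub>0)) * ennreal (\<phi> \<bar>c0 * f' x\<bar>) \<partial>lborel)"
      proof (rule nn_integral_mono)
        fix x
        have "ennreal (1/3 * w powr (- \<theta>\<^sub>0) * \<phi> \<bar>c0 * f' x\<bar>) = ennreal (1/3 * w powr (- \<theta>\<^sub>0)) * ennreal (\<phi> \<bar>c0 * f' x\<bar>)"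
          using phi_nonneg[OF phi(1)] by (intro ennreal_mult) auto
        then show "ennreal (\<phi> \<bar>\<mu> * (S_op n g w f' x - f' x)\<bar>) \<le> ennreal (\<epsilon> / 2 * w) * (\<integral>\<^sup>+t. F x t \<partial>lborel) + ennreal (1/3 * w powr (- \<theta>\<^sub>0)) * ennreal (\<phi> \<bar>c0 * f' x\<bar>)"
          using PW[of x] unfolding F_def by simp
      qed
      also have "\<dots> = ennreal (\<epsilon> / 2 * w) * T1 + ennreal (1/3 * w powr (- \<theta>\<^sub>0)) * T2"
      proof -
        have a: "(\<lambda>x. \<integral>\<^sup>+t. F x t \<partial>lborel) \<in> borel_measurable lborel"
          using lborel.borel_measurable_nn_integral[OF Fm] by simp
        have b: "(\<lambda>x. ennreal (\<phi> \<bar>c0 * f' x\<bar>)) \<in> borel_measurable lborel"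
        proof -
          have "(\<lambda>x. c0 * f' x) \<in> borel_measurable borel" by measurable
          from measurable_compose[OF this pm] show ?thesis by simp
        qed
        show ?thesis unfolding T1_def T2_def using a b
          by (subst nn_integral_add) (auto simp: nn_integral_cmult)
      qed
      also have "\<dots> \<le> ennreal (\<epsilon> / 2 * w) * (\<Omega> * ennreal (2 * \<delta>)) + ennreal (1/3 * w powr (- \<theta>\<^sub>0)) * T2"
        using T1b by (intro add_right_mono mult_left_mono) auto
      also have "ennreal (\<epsilon> / 2 * w) * (\<Omega> * ennreal (2 * \<delta>)) = \<Omega> * ennreal (1/3)"
      proof -
        have "\<epsilon> / 2 * w * (2 * \<delta>) = 1/3" unfolding \<epsilon>_def \<delta>_def using w0 R2 by (simp add: field_simps)
        then have "ennreal (\<epsilon> / 2 * w) * ennreal (2 * \<delta>) = ennreal (1/3)"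
          using eps w0 d0 by (simp add: ennreal_mult[symmetric])
        then show ?thesis by (metis mult.assoc mult.commute)
      qed
      also have "ennreal (1/3 * w powr (- \<theta>\<^sub>0)) * T2 = T2 / 3 * ennreal (w powr (- \<theta>\<^sub>0))"
      proof -
        have e: "ennreal (1/3 * w powr (- \<theta>\<^sub>0)) = ennreal (w powr (- \<theta>\<^sub>0)) * ennreal (1/3)"
          by (subst ennreal_mult[symmetric]) (auto simp: mult.commute)
        show ?thesis unfolding div3_ennreal e by (simp add: mult_ac)
      qed
      finally have "modular \<phi> (\<lambda>x. \<mu> * (S_op n g w f x - f x)) \<le> \<Omega> / 3 + modular \<phi> (\<lambda>x. c0 * f x) / 3 * ennreal (w powr (- \<theta>\<^sub>0))"
        unfolding div3_ennreal[of \<Omega>] T2eq .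
      also have "\<dots> \<le> \<Omega> / 3 + modulus \<eta> l f (1 / w) / 3 + modular \<phi> (\<lambda>x. c0 * f x) / 3 * ennreal (w powr (- \<theta>\<^sub>0))"
        by (intro add_right_mono) simp
      finally show ?thesis unfolding \<Omega>_def .
    qed
  qed
  show "\<exists>\<mu>>0. \<exists>c\<^sub>0>0. \<exists>l>0. \<forall>\<^sub>F w in at_top.
       modular \<phi> (\<lambda>x. \<mu> * (S_op n g w f x - f x))
       \<le> modulus \<eta> l f (1 / w powr \<alpha>) / 3 + modulus \<eta> l f (1 / w) / 3
          + modular \<phi> (\<lambda>x. c\<^sub>0 * f x) / 3 * ennreal (w powr (- \<theta>\<^sub>0))"
    using ev mu0 c00 l0 by blast
qed

end
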